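(* None of seriality, reflexivity, Euclideanity and convergency is definable in $\mathcal{L}(\nabla,\bullet)$: for each of these properties $P$ there is no formula $\phi\in\mathcal{L}(\nabla,\bullet)$ such that for every frame $\mathcal{F}$, $\mathcal{F}\vDash\phi$ iff $\mathcal{F}$ has property $P$.
   Context: Fix a nonempty set $\mathbf{P}$ of propositional variables. $\mathcal{L}(\nabla,\bullet)$: $\phi::=p\mid\neg\phi\mid\phi\land\phi\mid\nabla\phi\mid\bullet\phi$. A frame is $\langle S,R\rangle$ with $S\neq\emptyset$, $R\subseteq S\times S$; a model based on it adds $V:\mathbf{P}\to\mathcal{P}(S)$. Truth: $\mathcal{M},s\vDash\nabla\phi$ iff there are $t,u$ with $sRt$, $sRu$, $\mathcal{M},t\vDash\phi$, $\mathcal{M},u\nvDash\phi$; $\mathcal{M},s\vDash\bullet\phi$ iff $\mathcal{M},s\vDash\phi$ and there is $t$ with $sRt$, $\mathcal{M},t\nvDash\phi$. $\mathcal{F}\vDash\phi$ means $\phi$ is true at every state of every model based on $\mathcal{F}$. Seriality: every state has an $R$-successor; reflexivity: $xRx$ for all $x$; Euclideanity: $xRy\land xRz\Rightarrow yRz$; convergency: $xRy\land xRz\Rightarrow\exists w(yRw\land zRw)$. *)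

theory Defs
  imports Main
begin

datatype 'p form = Atom 'p | Neg "'p form" | Conj "'p form" "'p form"
  | Nabla "'p form" | Bullet "'p form"

fun sat :: "'s set \<Rightarrow> ('s \<Rightarrow> 's \<Rightarrow> bool) \<Rightarrow> ('p \<Rightarrow> 's set) \<Rightarrow> 's \<Rightarrow> 'p form \<Rightarrow> bool" where
  "sat S R V s (Atom p) = (s \<in> V p)"
| "sat S R V s (Neg f) = (\<not> sat S R V s f)"
| "sat S R V s (Conj f g) = (sat S R V s f \<and> sat S R V s g)"
| "sat S R V s (Nabla f) = (\<exists>t\<in>S. \<exists>u\<in>S. R s t \<and> R s u \<and> sat S R V t f \<and> \<not> sat S R V u f)"
| "sat S R V s (Bullet f) = (sat S R V s f \<and> (\<exists>t\<in>S. R s t \<and> \<not> sat S R V t f))"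

definition is_frame :: "'s set \<Rightarrow> ('s \<Rightarrow> 's \<Rightarrow> bool) \<Rightarrow> bool" where
  "is_frame S R \<longleftrightarrow> S \<noteq> {} \<and> (\<forall>x y. R x y \<longrightarrow> x \<in> S \<and> y \<in> S)"

definition frame_valid :: "'s set \<Rightarrow> ('s \<Rightarrow> 's \<Rightarrow> bool) \<Rightarrow> 'p form \<Rightarrow> bool" where
  "frame_valid S R f \<longleftrightarrow> (\<forall>V :: 'p \<Rightarrow> 's set. (\<forall>p. V p \<subseteq> S) \<longrightarrow> (\<forall>s\<in>S. sat S R V s f))"

definition serial :: "'s set \<Rightarrow> ('s \<Rightarrow> 's \<Rightarrow> bool) \<Rightarrow> bool" where
  "serial S R \<longleftrightarrow> (\<forall>x\<in>S. \<exists>y\<in>S. R x y)"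

definition reflexive :: "'s set \<Rightarrow> ('s \<Rightarrow> 's \<Rightarrow> bool) \<Rightarrow> bool" where
  "reflexive S R \<longleftrightarrow> (\<forall>x\<in>S. R x x)"

definition euclidean :: "'s set \<Rightarrow> ('s \<Rightarrow> 's \<Rightarrow> bool) \<Rightarrow> bool" where
  "euclidean S R \<longleftrightarrow> (\<forall>x\<in>S. \<forall>y\<in>S. \<forall>z\<in>S. R x y \<and> R x z \<longrightarrow> R y z)"

definition convergent :: "'s set \<Rightarrow> ('s \<Rightarrow> 's \<Rightarrow> bool) \<Rightarrow> bool" where
  "convergent S R \<longleftrightarrow> (\<forall>x\<in>S. \<forall>y\<in>S. \<forall>z\<in>S. R x y \<and> R x z \<longrightarrow> (\<exists>w\<in>S. R y w \<and> R z w))"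

definition definable :: "'p itself \<Rightarrow> (nat set \<Rightarrow> (nat \<Rightarrow> nat \<Rightarrow> bool) \<Rightarrow> bool) \<Rightarrow> bool" where
  "definable (_ :: 'p itself) P \<longleftrightarrow> (\<exists>f :: 'p form. \<forall>S R. is_frame S R \<longrightarrow> (frame_valid S R f \<longleftrightarrow> P S R))"

end

theory Submission
  imports Defs
begin

lemma nodef:
  assumes "is_frame S R1" "is_frame S R2"
    and eq: "\<And>V s (f::'p form). sat S R1 V s f = sat S R2 V s f"
    and "P S R2" "\<not> P S R1"
  shows "\<not> definable TYPE('p) P"
proof
  assume "definable TYPE('p) P"
  then obtain f :: "'p form" where h: "\<forall>S R. is_frame S R \<longrightarrow> (frame_valid S R f \<longleftrightarrow> P S R)"
    unfolding definable_def by blast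
  have "frame_valid S R2 f" using h assms by blast
  hence "frame_valid S R1 f" unfolding frame_valid_def using eq by simp
  thus False using h assms by blast
qed

lemma eqA: "sat {0::nat} (\<lambda>x y. x = 0 \<and> y = 0) V s f = sat {0} (\<lambda>x y. False) V s f"
proof (induction f arbitrary: s)
  case (Bullet f) show ?case
  proof
    assume "sat {0::nat} (\<lambda>x y. x = 0 \<and> y = 0) V s (Bullet f)"
    hence "s = 0" "sat {0::nat} (\<lambda>x y. x = 0 \<and> y = 0) V s f" "\<not> sat {0::nat} (\<lambda>x y. x = 0 \<and> y = 0) V 0 f" by auto
    thus "sat {0} (\<lambda>x y. False) V s (Bullet f)" by simp
  qed simp
qed auto

lemma eqB: "sat {0::nat,1} (\<lambda>x y. x = 0 \<and> y = 1) V s f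
          = sat {0,1} (\<lambda>x y. y = 1 \<and> (x = 0 \<or> x = 1)) V s f"
proof (induction f arbitrary: s)
  case (Bullet f) show ?case
  proof
    assume "sat {0::nat,1} (\<lambda>x y. y = 1 \<and> (x = 0 \<or> x = 1)) V s (Bullet f)"
    hence a: "s = 0 \<or> s = 1" "sat {0::nat,1} (\<lambda>x y. y = 1 \<and> (x = 0 \<or> x = 1)) V s f" "\<not> sat {0::nat,1} (\<lambda>x y. y = 1 \<and> (x = 0 \<or> x = 1)) V 1 f" by auto
    hence "s = 0" by auto
    with a Bullet show "sat {0::nat,1} (\<lambda>x y. x = 0 \<and> y = 1) V s (Bullet f)" by auto
  next
    assume "sat {0::nat,1} (\<lambda>x y. x = 0 \<and> y = 1) V s (Bullet f)"
    with Bullet show "sat {0::nat,1} (\<lambda>x y. y = 1 \<and> (x = 0 \<or> x = 1)) V s (Bullet f)" by auto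
  qed
qed auto

theorem corollary1:
  shows "\<not> definable TYPE('p) serial \<and> \<not> definable TYPE('p) reflexive
       \<and> \<not> definable TYPE('p) euclidean \<and> \<not> definable TYPE('p) convergent"
proof -
  have fA1: "is_frame {0::nat} (\<lambda>x y. x = 0 \<and> y = 0)" and fA2: "is_frame {0::nat} (\<lambda>x y. False)"
    by (auto simp: is_frame_def)
  have fB1: "is_frame {0::nat,1} (\<lambda>x y. x = 0 \<and> y = 1)"
    and fB2: "is_frame {0::nat,1} (\<lambda>x y. y = 1 \<and> (x = 0 \<or> x = 1))"
    by (auto simp: is_frame_def)
  have eA: "\<And>V s (f::'p form). sat {0::nat} (\<lambda>x y. False) V s f = sat {0} (\<lambda>x y. x = 0 \<and> y = 0) V s f"
    using eqA by metis
  show ?thesis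
  proof (intro conjI)
    show "\<not> definable TYPE('p) serial"
      by (rule nodef[OF fA2 fA1 eA]) (auto simp: serial_def)
    show "\<not> definable TYPE('p) reflexive"
      by (rule nodef[OF fA2 fA1 eA]) (auto simp: reflexive_def)
    show "\<not> definable TYPE('p) euclidean"
      by (rule nodef[OF fB1 fB2 eqB]) (auto simp: euclidean_def)
    show "\<not> definable TYPE('p) convergent"
      by (rule nodef[OF fB1 fB2 eqB]) (auto simp: convergent_def)
  qed
qed

end
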